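(* Consider the adaptive LP decoding algorithm described in the context, run on a binary linear code with parity-check matrix $H$ and log-likelihood vector $\underline\gamma\in\mathbb{R}^n$ with $\gamma_i\neq 0$ for all $i$. If at some iteration no cut is found at the current solution $\underline x$ (Step 3 finds no violated parity-check constraint), then $\underline x$ is an optimal solution of the LP decoding problem $\min\{\underline\gamma^T\underline x:\underline x\in\mathscr P\}$, where $\mathscr P$ is the fundamental polytope.
   Context: Let $H$ be an $m\times n$ binary parity-check matrix; for row $j$, $N(j)=\{i: H_{ji}=1\}$. The fundamental polytope $\mathscr P$ is the set of $\underline x\in\mathbb R^n$ with $0\le x_i\le 1$ for all $i$ and, for each $j=1,\dots,m$ and each odd-sized $V\subseteq N(j)$, $\sum_{i\in V}x_i-\sum_{i\in N(j)\setminus V}x_i\le |V|-1$ (parity-check constraints). A constraint is a cut at a point if it is violated there. Adaptive LP decoding: Step 1: form an initial LP minimizing $\underline\gamma^T\underline x$ subject to, for each $i$, the single constraint $0\le x_i$ if $\gamma_i>0$, or $x_i\le 1$ if $\gamma_i<0$. Step 2: solve the current LP, obtaining an optimal solution $\underline x$. Step 3: find all parity-check constraints (over all check nodes $j$ and odd $V\subseteq N(j)$) that are cuts at $\underline x$. Step 4: if any cuts were found, add them to the current LP's constraints and return to Step 2; otherwise output $\underline x$ and stop. *)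

theory Defs
  imports Complex_Main
begin

text \<open>Parity-check matrix H of size m x n, given as a Boolean matrix:
  H j i is true iff H_{ji} = 1 (rows j < m, columns i < n).
  Vectors in R^n are functions nat => real, only coordinates i < n matter.\<close>

definition nbhd :: "nat \<Rightarrow> (nat \<Rightarrow> nat \<Rightarrow> bool) \<Rightarrow> nat \<Rightarrow> nat set" where
  "nbhd n H j = {i. i < n \<and> H j i}"

definition pc_constraints :: "nat \<Rightarrow> nat \<Rightarrow> (nat \<Rightarrow> nat \<Rightarrow> bool) \<Rightarrow> (nat \<times> nat set) set" where
  "pc_constraints m n H = {(j, V). j < m \<and> V \<subseteq> nbhd n H j \<and> odd (card V)}"

definition pc_sat :: "nat \<Rightarrow> (nat \<Rightarrow> nat \<Rightarrow> bool) \<Rightarrow> nat \<times> nat set \<Rightarrow> (nat \<Rightarrow> real) \<Rightarrow> bool" where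
  "pc_sat n H c x = (case c of (j, V) \<Rightarrow>
     (\<Sum>i\<in>V. x i) - (\<Sum>i\<in>nbhd n H j - V. x i) \<le> real (card V) - 1)"

definition fundamental_polytope :: "nat \<Rightarrow> nat \<Rightarrow> (nat \<Rightarrow> nat \<Rightarrow> bool) \<Rightarrow> (nat \<Rightarrow> real) set" where
  "fundamental_polytope m n H =
     {x. (\<forall>i<n. 0 \<le> x i \<and> x i \<le> 1) \<and> (\<forall>c\<in>pc_constraints m n H. pc_sat n H c x)}"

definition objective :: "nat \<Rightarrow> (nat \<Rightarrow> real) \<Rightarrow> (nat \<Rightarrow> real) \<Rightarrow> real" where
  "objective n \<gamma> x = (\<Sum>i<n. \<gamma> i * x i)"

definition is_optimal :: "(nat \<Rightarrow> real) set \<Rightarrow> ((nat \<Rightarrow> real) \<Rightarrow> real) \<Rightarrow> (nat \<Rightarrow> real) \<Rightarrow> bool" where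
  "is_optimal S f x = (x \<in> S \<and> (\<forall>y\<in>S. f x \<le> f y))"

definition init_sat :: "nat \<Rightarrow> (nat \<Rightarrow> real) \<Rightarrow> (nat \<Rightarrow> real) \<Rightarrow> bool" where
  "init_sat n \<gamma> x = (\<forall>i<n. (\<gamma> i > 0 \<longrightarrow> 0 \<le> x i) \<and> (\<gamma> i < 0 \<longrightarrow> x i \<le> 1))"

definition lp_feasible :: "nat \<Rightarrow> (nat \<Rightarrow> nat \<Rightarrow> bool) \<Rightarrow> (nat \<Rightarrow> real) \<Rightarrow> (nat \<times> nat set) set \<Rightarrow> (nat \<Rightarrow> real) set" where
  "lp_feasible n H \<gamma> C = {x. init_sat n \<gamma> x \<and> (\<forall>c\<in>C. pc_sat n H c x)}"

definition cuts :: "nat \<Rightarrow> nat \<Rightarrow> (nat \<Rightarrow> nat \<Rightarrow> bool) \<Rightarrow> (nat \<Rightarrow> real) \<Rightarrow> (nat \<times> nat set) set" where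
  "cuts m n H x = {c \<in> pc_constraints m n H. \<not> pc_sat n H c x}"

text \<open>A run of adaptive LP decoding up to iteration K: Cs k is the set of parity-check
  constraints in the LP at iteration k, xs k the optimal solution obtained in Step 2.
  In iterations k < K cuts were found and added; iteration K is the current one.\<close>
definition adaptive_run :: "nat \<Rightarrow> nat \<Rightarrow> (nat \<Rightarrow> nat \<Rightarrow> bool) \<Rightarrow> (nat \<Rightarrow> real) \<Rightarrow>
    (nat \<Rightarrow> (nat \<times> nat set) set) \<Rightarrow> (nat \<Rightarrow> nat \<Rightarrow> real) \<Rightarrow> nat \<Rightarrow> bool" where
  "adaptive_run m n H \<gamma> Cs xs K =
     (Cs 0 = {} \<and>
      (\<forall>k\<le>K. is_optimal (lp_feasible n H \<gamma> (Cs k)) (objective n \<gamma>) (xs k)) \<and>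
      (\<forall>k<K. cuts m n H (xs k) \<noteq> {} \<and> Cs (Suc k) = Cs k \<union> cuts m n H (xs k)))"

end

theory Submission
  imports Defs
begin

definition clip :: "real \<Rightarrow> real" where "clip t = max 0 (min 1 t)"

lemma clip_pc:
  fixes x :: "nat \<Rightarrow> real"
  assumes fin: "finite N" and sub: "V \<subseteq> N"
    and h: "(\<Sum>i\<in>V. x i) - (\<Sum>i\<in>N - V. x i) \<le> real (card V) - 1"
  shows "(\<Sum>i\<in>V. clip (x i)) - (\<Sum>i\<in>N - V. clip (x i)) \<le> real (card V) - 1"
proof -
  have finV: "finite V" using fin sub finite_subset by blast
  have cV: "(\<Sum>i\<in>V. (1::real)) = real (card V)" by simp
  have eq: "\<And>f. (\<Sum>i\<in>V. f i) - (\<Sum>i\<in>N - V. f i) \<le> real (card V) - 1 \<longleftrightarrow>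
      1 \<le> (\<Sum>i\<in>V. 1 - f i) + (\<Sum>i\<in>N - V. (f i::real))"
    using cV by (simp add: sum_subtractf) linarith
  have nn1: "\<And>i. 0 \<le> 1 - clip (x i)" "\<And>i. 0 \<le> clip (x i)" by (auto simp: clip_def)
  have h': "1 \<le> (\<Sum>i\<in>V. 1 - x i) + (\<Sum>i\<in>N - V. x i)" using h eq by blast
  have "1 \<le> (\<Sum>i\<in>V. 1 - clip (x i)) + (\<Sum>i\<in>N - V. clip (x i))"
  proof (cases "\<exists>i\<in>V. x i \<le> 0")
    case True
    then obtain a where a: "a \<in> V" "x a \<le> 0" by blast
    have "1 = 1 - clip (x a)" using a by (simp add: clip_def)
    also have "\<dots> \<le> (\<Sum>i\<in>V. 1 - clip (x i))"
      using member_le_sum[of a V "\<lambda>i. 1 - clip (x i)"] a finV nn1 by auto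
    also have "\<dots> \<le> (\<Sum>i\<in>V. 1 - clip (x i)) + (\<Sum>i\<in>N - V. clip (x i))"
      using sum_nonneg[of "N - V" "\<lambda>i. clip (x i)"] nn1 by auto
    finally show ?thesis .
  next
    case F1: False
    show ?thesis
    proof (cases "\<exists>i\<in>N - V. 1 \<le> x i")
      case True
      then obtain a where a: "a \<in> N - V" "1 \<le> x a" by blast
      have "1 = clip (x a)" using a by (simp add: clip_def)
      also have "\<dots> \<le> (\<Sum>i\<in>N - V. clip (x i))"
        using member_le_sum[of a "N - V" "\<lambda>i. clip (x i)"] a fin nn1 by auto
      also have "\<dots> \<le> (\<Sum>i\<in>V. 1 - clip (x i)) + (\<Sum>i\<in>N - V. clip (x i))"
        using sum_nonneg[of V "\<lambda>i. 1 - clip (x i)"] nn1 by auto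
      finally show ?thesis .
    next
      case False
      have s1: "(\<Sum>i\<in>V. 1 - x i) \<le> (\<Sum>i\<in>V. 1 - clip (x i))"
        by (rule sum_mono) (use F1 in \<open>auto simp: clip_def\<close>)
      have s2: "(\<Sum>i\<in>N - V. x i) \<le> (\<Sum>i\<in>N - V. clip (x i))"
        by (rule sum_mono) (use False in \<open>force simp: clip_def\<close>)
      show ?thesis using s1 s2 h' by linarith
    qed
  qed
  then show ?thesis using eq by blast
qed

lemma clip_pc_sat:
  assumes "c \<in> pc_constraints m n H" "pc_sat n H c x"
  shows "pc_sat n H c (\<lambda>i. clip (x i))"
  using assms clip_pc[of "nbhd n H (fst c)" "snd c" x]
  by (auto simp: pc_constraints_def pc_sat_def nbhd_def)

theorem lemma1:
  fixes m n :: nat and H :: "nat \<Rightarrow> nat \<Rightarrow> bool" and \<gamma> :: "nat \<Rightarrow> real"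
    and Cs :: "nat \<Rightarrow> (nat \<times> nat set) set" and xs :: "nat \<Rightarrow> nat \<Rightarrow> real" and K :: nat
  assumes "\<forall>i<n. \<gamma> i \<noteq> 0"
    and "adaptive_run m n H \<gamma> Cs xs K"
    and "cuts m n H (xs K) = {}"
  shows "is_optimal (fundamental_polytope m n H) (objective n \<gamma>) (xs K)"
proof -
  have run: "Cs 0 = {}" "\<forall>k\<le>K. is_optimal (lp_feasible n H \<gamma> (Cs k)) (objective n \<gamma>) (xs k)"
      "\<forall>k<K. Cs (Suc k) = Cs k \<union> cuts m n H (xs k)"
    using assms(2) unfolding adaptive_run_def by auto
  have CsP: "k \<le> K \<Longrightarrow> Cs k \<subseteq> pc_constraints m n H" for k
  proof (induction k)
    case 0 then show ?case using run(1) by simp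
  next
    case (Suc k) then show ?case using run(3) by (auto simp: cuts_def)
  qed
  define x where "x = xs K"
  have opt: "x \<in> lp_feasible n H \<gamma> (Cs K)"
    "\<And>y. y \<in> lp_feasible n H \<gamma> (Cs K) \<Longrightarrow> objective n \<gamma> x \<le> objective n \<gamma> y"
    using run(2) unfolding x_def is_optimal_def by auto
  have allpc: "\<And>c. c \<in> pc_constraints m n H \<Longrightarrow> pc_sat n H c x"
    using assms(3) unfolding cuts_def x_def by blast
  define y where "y = (\<lambda>i. clip (x i))"
  have yF: "y \<in> lp_feasible n H \<gamma> (Cs K)"
    using CsP[of K] allpc clip_pc_sat
    by (auto simp: lp_feasible_def init_sat_def y_def clip_def)
  have init: "init_sat n \<gamma> x" using opt(1) by (simp add: lp_feasible_def)
  have termle: "\<And>i. i < n \<Longrightarrow> \<gamma> i * y i \<le> \<gamma> i * x i"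
  proof -
    fix i assume i: "i < n"
    show "\<gamma> i * y i \<le> \<gamma> i * x i"
    proof (cases "\<gamma> i > 0")
      case True
      then have "0 \<le> x i" using init i by (simp add: init_sat_def)
      then have "y i \<le> x i" by (simp add: y_def clip_def)
      then show ?thesis using True by (simp add: mult_left_mono)
    next
      case False
      then have g: "\<gamma> i < 0" using assms(1) i by force
      then have "x i \<le> 1" using init i by (simp add: init_sat_def)
      then have "x i \<le> y i" by (simp add: y_def clip_def)
      then show ?thesis using g by (simp add: mult_left_mono_neg)
    qed
  qed
  have box: "\<forall>i<n. 0 \<le> x i \<and> x i \<le> 1"
  proof (rule ccontr)
    assume "\<not> ?thesis"
    then obtain a where a: "a < n" "\<not> (0 \<le> x a \<and> x a \<le> 1)" by blast
    have strict: "\<gamma> a * y a < \<gamma> a * x a"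
    proof (cases "\<gamma> a > 0")
      case True
      then have "0 \<le> x a" using init a by (simp add: init_sat_def)
      then have "y a < x a" using a by (simp add: y_def clip_def)
      then show ?thesis using True by simp
    next
      case False
      then have g: "\<gamma> a < 0" using assms(1) a by force
      then have "x a \<le> 1" using init a by (simp add: init_sat_def)
      then have "x a < y a" using a by (simp add: y_def clip_def)
      then show ?thesis using g by simp
    qed
    have "objective n \<gamma> y < objective n \<gamma> x"
      unfolding objective_def
      by (rule sum_strict_mono_ex1) (use termle a strict in auto)
    then show False using opt(2)[OF yF] by simp
  qed
  have xP: "x \<in> fundamental_polytope m n H"
    using box allpc by (simp add: fundamental_polytope_def)
  have sub: "fundamental_polytope m n H \<subseteq> lp_feasible n H \<gamma> (Cs K)"
    using CsP[of K] by (auto simp: fundamental_polytope_def lp_feasible_def init_sat_def)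
  show ?thesis using xP sub opt(2) unfolding is_optimal_def x_def by blast
qed

end
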